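(* Let $d\ge200$, $\alpha=2$ and $p_0=1-\Phi(-2)$, and let $\mathcal{D}$ be the distribution defined in the context. Let $S_\infty(\mathbf{x})=\{\mathbf{x}+\mathbf{r}:\|\mathbf{r}\|_\infty\le 3/\sqrt d\}$, $S_1(\mathbf{x})=\{\mathbf{x}+\mathbf{r}:\|\mathbf{r}\|_1\le3\}$, and $S_{\mathrm{affine}}(\mathbf{x})=\{\mathbf{x}+\mathbf{r}_1+\mathbf{r}_2:\beta\in[0,1],\ \|\mathbf{r}_1\|_\infty\le 3\beta/\sqrt d,\ \|\mathbf{r}_2\|_1\le3(1-\beta)\}$. Then there exists a (necessarily non-linear) classifier $g:\mathbb{R}^{d+1}\to\{-1,+1\}$ with $\mathcal{R}^{\mathrm{max}}_{\mathrm{adv}}(g;S_\infty,S_1)\le 0.35$, while every classifier $f:\mathbb{R}^{d+1}\to\{-1,+1\}$ satisfies $\mathcal{R}_{\mathrm{adv}}(f;S_{\mathrm{affine}})\ge 1/2$.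
   Context: $\Phi$ is the standard normal CDF. The distribution $\mathcal{D}$ over $(\mathbf{x},y)$, $\mathbf{x}=(x_0,\dots,x_d)$: $y$ uniform on $\{-1,+1\}$; given $y$, $x_0=+y$ with probability $p_0$ and $-y$ with probability $1-p_0$; $x_1,\dots,x_d$ i.i.d. $\mathcal{N}(y\eta,1)$ with $\eta=\alpha/\sqrt d$, independent of $x_0$. Adversarial risk: $\mathcal{R}_{\mathrm{adv}}(f;S)=\Pr_{(\mathbf{x},y)\sim\mathcal{D}}[\exists\,\mathbf{x}'\in S(\mathbf{x}): f(\mathbf{x}')\neq y]$; $\mathcal{R}^{\mathrm{max}}_{\mathrm{adv}}(f;S_\infty,S_1)=\mathcal{R}_{\mathrm{adv}}(f;S_\infty\cup S_1)$ with pointwise union of sets. *)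

theory Defs
  imports "HOL-Probability.Probability"
begin

text \<open>Points of R^(d+1) are pairs (x0, z) with x0 the distinguished coordinate
  and z :: real^'n the remaining d = CARD('n) coordinates.\<close>

definition Phi :: "real \<Rightarrow> real" where
  "Phi t = measure (density lborel std_normal_density) {..t}"

definition linf_norm :: "real \<times> (real^'n) \<Rightarrow> real" where
  "linf_norm r = max \<bar>fst r\<bar> (Max (range (\<lambda>i. \<bar>snd r $ i\<bar>)))"

definition l1_norm :: "real \<times> (real^'n) \<Rightarrow> real" where
  "l1_norm r = \<bar>fst r\<bar> + (\<Sum>i\<in>UNIV. \<bar>snd r $ i\<bar>)"

definition gauss_vec :: "real \<Rightarrow> (real^'n) measure" where
  "gauss_vec m = density lborel (\<lambda>z. \<Prod>i\<in>UNIV. normal_density m 1 (z $ i))"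

definition data_dist :: "real \<Rightarrow> real \<Rightarrow> ((real \<times> (real^'n)) \<times> real) measure" where
  "data_dist p0 eta =
     measure_pmf (pmf_of_set {-1, 1::real}) \<bind> (\<lambda>y.
       measure_pmf (bernoulli_pmf p0) \<bind> (\<lambda>b.
         distr (gauss_vec (y * eta)) borel (\<lambda>z. (((if b then y else - y), z), y))))"

text \<open>Adversarial risk, taken as the outer probability of the bad event
  (coincides with its probability whenever the event is measurable).\<close>
definition adv_risk ::
  "((real \<times> (real^'n)) \<times> real) measure \<Rightarrow> (real \<times> (real^'n) \<Rightarrow> real)
     \<Rightarrow> (real \<times> (real^'n) \<Rightarrow> (real \<times> (real^'n)) set) \<Rightarrow> real" where
  "adv_risk D f S = Inf {measure D A | A. A \<in> sets D \<and>
      {(x, y) \<in> space D. \<exists>x' \<in> S x. f x' \<noteq> y} \<subseteq> A}"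

definition S_inf :: "real \<Rightarrow> real \<times> (real^'n) \<Rightarrow> (real \<times> (real^'n)) set" where
  "S_inf d x = {x + r | r. linf_norm r \<le> 3 / sqrt d}"

definition S_one :: "real \<times> (real^'n) \<Rightarrow> (real \<times> (real^'n)) set" where
  "S_one x = {x + r | r. l1_norm r \<le> 3}"

definition S_affine :: "real \<Rightarrow> real \<times> (real^'n) \<Rightarrow> (real \<times> (real^'n)) set" where
  "S_affine d x = {x + r1 + r2 | r1 r2. \<exists>\<beta>\<in>{0..1}.
      linf_norm r1 \<le> 3 * \<beta> / sqrt d \<and> l1_norm r2 \<le> 3 * (1 - \<beta>)}"

end

theory Submission
  imports Defs
begin


definition qexp :: "real \<Rightarrow> real" where
  "qexp a = 1 - a/2 + a^2/8 - a^3/48 + a^4/384 - a^5/3840 + a^6/46080 - a^7/645120"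

lemma qexp_le: "qexp (x^2) \<le> exp (-(x^2)/2)"
proof -
  obtain t where t: "exp (-(x^2)/2) = (\<Sum>m<8. (-(x^2)/2) ^ m / fact m) + exp t / fact 8 * (-(x^2)/2) ^ 8"
    using Maclaurin_exp_le[of "-(x^2)/2" 8] by blast
  have e: "(\<Sum>m<8. (-(a::real)/2) ^ m / fact m) = qexp a" for a
    unfolding qexp_def by (simp add: eval_nat_numeral power_divide lessThan_Suc)
  have "exp t / fact 8 * (-(x^2)/2) ^ 8 \<ge> 0" by (simp add: zero_le_even_power)
  then show ?thesis using t e[of "x^2"] by linarith
qed

definition Fexp :: "real \<Rightarrow> real" where
  "Fexp x = x - x^3/6 + x^5/40 - x^7/336 + x^9/3456 - x^11/42240 + x^13/599040 - x^15/9676800"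

lemma Fexp_deriv: "(Fexp has_real_derivative qexp (x^2)) (at x)"
proof -
  have "(Fexp has_real_derivative (1 - 3*x^2/6 + 5*x^4/40 - 7*x^6/336 + 9*x^8/3456 - 11*x^10/42240
      + 13*x^12/599040 - 15*x^14/9676800)) (at x)"
    unfolding Fexp_def by (auto intro!: derivative_eq_intros)
  moreover have "(1 - 3*x^2/6 + 5*x^4/40 - 7*x^6/336 + 9*x^8/3456 - 11*x^10/42240
      + 13*x^12/599040 - 15*x^14/9676800) = qexp (x^2)"
    unfolding qexp_def by (simp add: power_mult[symmetric])
  ultimately show ?thesis by simp
qed


abbreviation "Nstd \<equiv> density lborel std_normal_density"

lemma Nstd_prob: "prob_space Nstd" by (rule prob_space_normal_density) simp

lemma int_lb:
  assumes t: "0 \<le> t"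
  shows "Fexp t / sqrt (2*pi) \<le> integral {-t..0} std_normal_density"
proof -
  have "((\<lambda>x. qexp (x^2)) has_integral (Fexp 0 - Fexp (-t))) {-t..0}"
    using t by (intro fundamental_theorem_of_calculus)
      (auto simp: has_real_derivative_iff_has_vector_derivative[symmetric] intro!: DERIV_subset[OF Fexp_deriv])
  moreover have "Fexp 0 - Fexp (-t) = Fexp t" unfolding Fexp_def by simp
  ultimately have h1: "((\<lambda>x. qexp (x^2) / sqrt (2*pi)) has_integral (Fexp t / sqrt (2*pi))) {-t..0}"
    by (simp add: has_integral_divide)
  have "continuous_on {-t..0} std_normal_density"
    unfolding std_normal_density_def by (intro continuous_intros) auto
  then have h2: "(std_normal_density has_integral integral {-t..0} std_normal_density) {-t..0}"
    using integrable_continuous_interval by blast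
  show ?thesis
  proof (rule has_integral_le[OF h1 h2])
    fix x
    have "qexp (x^2) / sqrt (2*pi) \<le> exp (-(x^2)/2) / sqrt (2*pi)"
      by (rule divide_right_mono[OF qexp_le]) simp
    also have "\<dots> = std_normal_density x" unfolding std_normal_density_def by simp
    finally show "qexp (x^2) / sqrt (2*pi) \<le> std_normal_density x" .
  qed
qed

lemma Nstd_interval: "emeasure Nstd {a..b} = ennreal (integral {a..b} std_normal_density)"
proof -
  have "continuous_on {a..b} std_normal_density"
    unfolding std_normal_density_def by (intro continuous_intros) auto
  then have h2: "(std_normal_density has_integral integral {a..b} std_normal_density) {a..b}"
    using integrable_continuous_interval by blast
  show ?thesis
    using nn_integral_has_integral_lebesgue'[OF _ h2] by (simp add: emeasure_density)
qed

lemma Nstd_single: "measure Nstd {a} = 0"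
proof -
  have "emeasure Nstd {a..a} = 0" unfolding Nstd_interval by simp
  then show ?thesis by (simp add: measure_def)
qed

lemma Nstd_sym: "distr Nstd borel uminus = Nstd"
proof -
  have "distr Nstd borel uminus = density (distr lborel borel uminus) std_normal_density"
    by (subst density_distr) (auto simp: comp_def normal_density_def)
  then show ?thesis by (simp add: lborel_distr_uminus)
qed

lemma Nstd_sym_measure:
  assumes "A \<in> sets borel"
  shows "measure Nstd (uminus -` A) = measure Nstd A"
proof -
  have "measure Nstd A = measure (distr Nstd borel uminus) A"
    by (simp add: Nstd_sym)
  also have "\<dots> = measure Nstd (uminus -` A \<inter> space Nstd)"
    using assms by (subst measure_distr) auto
  finally show ?thesis by simp
qed


interpretation N: prob_space Nstd by (rule Nstd_prob)

lemma Nstd_interval_measure: "a \<le> b \<Longrightarrow> measure Nstd {a..b} = integral {a..b} std_normal_density"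
proof -
  assume "a \<le> b"
  have "integral {a..b} std_normal_density \<ge> 0"
    by (rule integral_nonneg) (auto intro!: integrable_continuous_interval continuous_intros simp: std_normal_density_def)
  then show ?thesis using Nstd_interval[of a b] by (simp add: measure_def)
qed

lemma Nstd_half: "measure Nstd {..0} = 1/2"
proof -
  have s: "measure Nstd {..<0} = measure Nstd {0<..}"
    using Nstd_sym_measure[of "{0<..}"] by (simp add: vimage_def lessThan_def)
  have "measure Nstd {..0} = measure Nstd ({..<0} \<union> {0})"
    by (rule arg_cong[where f="measure Nstd"]) auto
  also have "\<dots> = measure Nstd {..<0} + measure Nstd {0}"
    by (rule N.finite_measure_Union) auto
  finally have a: "measure Nstd {..0} = measure Nstd {..<0}" using Nstd_single by simp
  have u: "{..0} \<union> {0<..} = (UNIV::real set)" by auto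
  have "1 = measure Nstd ({..0} \<union> {0<..})"
    using N.prob_space by (simp only: u) simp
  also have "\<dots> = measure Nstd {..0} + measure Nstd {0<..}"
    by (rule N.finite_measure_Union) auto
  finally show ?thesis using a s by simp
qed

lemma Phi_le:
  assumes t: "0 \<le> t"
  shows "Phi (-t) \<le> 1/2 - Fexp t / sqrt (2*pi)"
proof -
  have "measure Nstd {..0} = measure Nstd ({..<-t} \<union> {-t..0})"
    using t by (intro arg_cong[where f="measure Nstd"]) auto
  also have "\<dots> = measure Nstd {..<-t} + measure Nstd {-t..0}"
    by (rule N.finite_measure_Union) auto
  finally have a: "measure Nstd {..<-t} = 1/2 - integral {-t..0} std_normal_density"
    using Nstd_half Nstd_interval_measure[of "-t" 0] t by simp
  have "measure Nstd {..-t} = measure Nstd ({..<-t} \<union> {-t})"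
    by (rule arg_cong[where f="measure Nstd"]) auto
  also have "\<dots> = measure Nstd {..<-t} + measure Nstd {-t}"
    by (rule N.finite_measure_Union) auto
  finally have "Phi (-t) = measure Nstd {..<-t}"
    using Nstd_single by (simp add: Phi_def)
  then show ?thesis using a int_lb[OF t] by simp
qed

lemma tail_lower: "0 \<le> t \<Longrightarrow> measure Nstd {x. x < -t} \<le> 1/2 - Fexp t / sqrt (2*pi)"
proof -
  assume t: "0 \<le> t"
  have "measure Nstd {x. x < -t} \<le> measure Nstd {..-t}"
    by (rule N.finite_measure_mono) auto
  then show ?thesis using Phi_le[OF t] by (simp add: Phi_def)
qed

lemma tail_upper: "0 \<le> t \<Longrightarrow> measure Nstd {x. x > t} \<le> 1/2 - Fexp t / sqrt (2*pi)"
proof -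
  assume t: "0 \<le> t"
  have "measure Nstd {x. x > t} = measure Nstd {x. x < -t}"
    using Nstd_sym_measure[of "{x. x < -t}"] by (simp add: vimage_def)
  then show ?thesis using tail_lower[OF t] by simp
qed

lemma sqrt2pi: "sqrt (2*pi) \<le> 25067/10000"
proof -
  have e: "(25067/10000::real)^2 = 628354489/100000000" by (simp add: power2_eq_square)
  have "2*pi \<le> (25067/10000)^2" unfolding e using pi_approx(2) by simp
  then show ?thesis using real_sqrt_le_mono[of "2*pi" "(25067/10000)^2"] by simp
qed

lemma Phi_m2: "Phi (-2) \<le> 231/10000"
proof -
  have f: "Fexp 2 \<ge> 11956/10000" unfolding Fexp_def by simp
  have "Fexp 2 / sqrt (2*pi) \<ge> (11956/10000) / (25067/10000)"
    using f sqrt2pi by (intro frac_le) auto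
  then show ?thesis using Phi_le[of 2] by simp
qed

lemma tail045: "measure Nstd {x. x < -(45/100)} \<le> 327/1000"
   "measure Nstd {x. x > 45/100} \<le> 327/1000"
proof -
  have f: "Fexp (45/100) \<ge> 4350/10000" unfolding Fexp_def by (simp add: power_divide)
  have "Fexp (45/100) / sqrt (2*pi) \<ge> (4350/10000) / (25067/10000)"
    using f sqrt2pi by (intro frac_le) auto
  then show "measure Nstd {x. x < -(45/100)} \<le> 327/1000" "measure Nstd {x. x > 45/100} \<le> 327/1000"
    using tail_lower[of "45/100"] tail_upper[of "45/100"] by simp_all
qed


lemma Basis_vec_real: "(Basis :: (real^'n) set) = range (\<lambda>i. axis i 1)"
  by (auto simp: Basis_vec_def)

lemma vec_lambda_measurable:
  "(\<lambda>f. vec_lambda f :: real^'n) \<in> borel_measurable (PiM UNIV (\<lambda>_::'n. lborel))"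
proof (subst borel_measurable_euclidean_space, intro ballI)
  fix b :: "real^'n" assume "b \<in> Basis"
  then obtain j where b: "b = axis j 1" by (auto simp: Basis_vec_def)
  have "(\<lambda>f. vec_lambda f \<bullet> b) = (\<lambda>f. f j)"
    by (simp add: b inner_axis)
  then show "(\<lambda>f. vec_lambda f \<bullet> b) \<in> borel_measurable (PiM UNIV (\<lambda>_::'n. lborel))"
    by simp
qed

lemma lborel_vec: "(lborel :: (real^'n) measure) = distr (PiM UNIV (\<lambda>_::'n. lborel)) borel vec_lambda"
proof (rule lborel_eqI)
  interpret product_sigma_finite "\<lambda>_::'n. lborel" ..
  fix l u :: "real^'n"
  assume lu: "\<And>b. b \<in> Basis \<Longrightarrow> l \<bullet> b \<le> u \<bullet> b"
  have pre: "vec_lambda -` box l u \<inter> space (PiM UNIV (\<lambda>_::'n. lborel)) = PiE UNIV (\<lambda>i. {l$i<..<u$i})"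
    by (auto simp: mem_box_cart space_PiM PiE_def Pi_def extensional_def)
  have "emeasure (distr (PiM UNIV (\<lambda>_::'n. lborel)) borel vec_lambda) (box l u)
      = emeasure (PiM UNIV (\<lambda>_::'n. lborel)) (PiE UNIV (\<lambda>i. {l$i<..<u$i}))"
    by (subst emeasure_distr) (auto simp: vec_lambda_measurable pre)
  also have "\<dots> = (\<Prod>i\<in>UNIV. emeasure lborel {l$i<..<u$i})"
    by (rule emeasure_PiM) auto
  also have "\<dots> = (\<Prod>i\<in>UNIV. ennreal (u$i - l$i))"
    using lu[of "axis _ 1"] by (intro prod.cong) (auto simp: inner_axis)
  also have "\<dots> = ennreal (\<Prod>i\<in>UNIV. (u$i - l$i))"
    using lu[of "axis _ 1"] by (intro prod_ennreal) (auto simp: inner_axis)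
  also have "(\<Prod>i\<in>UNIV. (u$i - l$i)) = (\<Prod>b\<in>Basis. (u - l) \<bullet> b)"
    unfolding Basis_vec_real
    by (subst prod.reindex) (auto simp: inj_on_def axis_eq_axis inner_axis)
  finally show "emeasure (distr (PiM UNIV (\<lambda>_::'n. lborel)) borel vec_lambda) (box l u) = (\<Prod>b\<in>Basis. (u - l) \<bullet> b)" .
qed simp


abbreviation Nm :: "real \<Rightarrow> real measure" where "Nm m \<equiv> density lborel (normal_density m 1)"

lemma Nm_prob: "prob_space (Nm m)" by (rule prob_space_normal_density) simp

lemma PiM_density:
  "density (PiM UNIV (\<lambda>_::'n::finite. lborel)) (\<lambda>f. \<Prod>i\<in>UNIV. ennreal (normal_density m 1 (f i)))
   = PiM UNIV (\<lambda>_::'n. Nm m)"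
proof -
  interpret Q: product_sigma_finite "\<lambda>_::'n. lborel" ..
  interpret P: product_prob_space "\<lambda>_::'n. Nm m"
    by (simp add: product_prob_space_def product_prob_space_axioms_def product_sigma_finite_def Nm_prob prob_space_imp_sigma_finite)
  show ?thesis
  proof (rule P.PiM_eqI)
    show "finite (UNIV :: 'n set)" by simp
    show "sets (density (PiM UNIV (\<lambda>_::'n. lborel)) (\<lambda>f. \<Prod>i\<in>UNIV. ennreal (normal_density m 1 (f i))))
      = sets (PiM UNIV (\<lambda>_::'n. Nm m))"
      by (simp cong: sets_PiM_cong)
    fix A :: "'n \<Rightarrow> real set"
    assume A: "\<And>i. i \<in> UNIV \<Longrightarrow> A i \<in> sets (Nm m)"
    then have Ab: "\<And>i. A i \<in> sets borel" by simp
    have "emeasure (density (PiM UNIV (\<lambda>_::'n. lborel)) (\<lambda>f. \<Prod>i\<in>UNIV. ennreal (normal_density m 1 (f i)))) (PiE UNIV A)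
       = (\<integral>\<^sup>+ f. (\<Prod>i\<in>UNIV. ennreal (normal_density m 1 (f i))) * indicator (PiE UNIV A) f \<partial>PiM UNIV (\<lambda>_::'n. lborel))"
      using Ab by (subst emeasure_density) (auto intro!: sets_PiM_I_finite)
    also have "\<dots> = (\<integral>\<^sup>+ f. (\<Prod>i\<in>UNIV. ennreal (normal_density m 1 (f i)) * indicator (A i) (f i)) \<partial>PiM UNIV (\<lambda>_::'n. lborel))"
      by (intro nn_integral_cong) (auto simp: indicator_def PiE_def Pi_def prod.distrib)
    also have "\<dots> = (\<Prod>i\<in>UNIV. (\<integral>\<^sup>+ x. ennreal (normal_density m 1 x) * indicator (A i) x \<partial>lborel))"
      using Ab by (subst Q.product_nn_integral_prod) auto
    also have "\<dots> = (\<Prod>i\<in>UNIV. emeasure (Nm m) (A i))"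
      using Ab by (intro prod.cong refl) (simp add: emeasure_density)
    finally show "emeasure (density (PiM UNIV (\<lambda>_::'n. lborel)) (\<lambda>f. \<Prod>i\<in>UNIV. ennreal (normal_density m 1 (f i)))) (PiE UNIV A)
       = (\<Prod>i\<in>UNIV. emeasure (Nm m) (A i))" .
  qed
qed

lemma gauss_vec_PiM:
  "(gauss_vec m :: (real^'n::finite) measure) = distr (PiM UNIV (\<lambda>_::'n. Nm m)) borel vec_lambda"
proof -
  have "(gauss_vec m :: (real^'n) measure) =
      density (distr (PiM UNIV (\<lambda>_::'n. lborel)) borel vec_lambda) (\<lambda>z. ennreal (\<Prod>i\<in>UNIV. normal_density m 1 (z $ i)))"
    unfolding gauss_vec_def lborel_vec[symmetric] ..
  also have "\<dots> = distr (density (PiM UNIV (\<lambda>_::'n. lborel)) (\<lambda>f. ennreal (\<Prod>i\<in>UNIV. normal_density m 1 (f i)))) borel vec_lambda"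
    by (subst density_distr) (auto simp: vec_lambda_measurable comp_def)
  also have "(\<lambda>f::'n\<Rightarrow>real. ennreal (\<Prod>i\<in>UNIV. normal_density m 1 (f i))) = (\<lambda>f. \<Prod>i\<in>UNIV. ennreal (normal_density m 1 (f i)))"
    by (auto simp: prod_ennreal)
  finally show ?thesis by (simp only: PiM_density)
qed


lemma PiNm_prob: "prob_space (PiM UNIV (\<lambda>_::'n::finite. Nm m))"
  by (rule prob_space_PiM) (simp add: Nm_prob)

lemma vec_lambda_measurable_Nm:
  "(\<lambda>f. vec_lambda f :: real^'n) \<in> borel_measurable (PiM UNIV (\<lambda>_::'n::finite. Nm m))"
proof -
  have e: "sets (PiM UNIV (\<lambda>_::'n. Nm m)) = sets (PiM UNIV (\<lambda>_::'n. lborel))" by (rule sets_PiM_cong) auto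
  show ?thesis by (subst measurable_cong_sets[OF e refl]) (rule vec_lambda_measurable)
qed

lemma gauss_vec_prob: "prob_space (gauss_vec m :: (real^'n::finite) measure)"
  unfolding gauss_vec_PiM
  by (intro prob_space.prob_space_distr PiNm_prob) (simp add: vec_lambda_measurable_Nm)

lemma sets_gauss_vec[simp]: "sets (gauss_vec m :: (real^'n::finite) measure) = sets borel"
  unfolding gauss_vec_def by simp

lemma sum_std:
  "distributed (PiM UNIV (\<lambda>_::'n::finite. Nm m)) lborel
     (\<lambda>f. ((\<Sum>i\<in>UNIV. f i) - real CARD('n) * m) / sqrt (real CARD('n))) std_normal_density"
proof -
  let ?P = "PiM UNIV (\<lambda>_::'n::finite. Nm m)"
  interpret P: prob_space ?P by (rule PiNm_prob)
  interpret PP: product_prob_space "\<lambda>_::'n. Nm m"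
    by (simp add: product_prob_space_def product_prob_space_axioms_def product_sigma_finite_def Nm_prob prob_space_imp_sigma_finite)
  have comp: "distr ?P lborel (\<lambda>f. f i) = Nm m" for i
  proof -
    have "distr ?P lborel (\<lambda>f. f i) = distr ?P (Nm m) (\<lambda>f. f i)"
      by (rule distr_cong) auto
    also have "\<dots> = Nm m" by (rule distr_PiM_component) (auto simp: Nm_prob)
    finally show ?thesis .
  qed
  have comp': "distr ?P borel (\<lambda>f. f i) = Nm m" for i
  proof -
    have "distr ?P borel (\<lambda>f. f i) = distr ?P lborel (\<lambda>f. f i)" by (rule distr_cong) auto
    then show ?thesis using comp by simp
  qed
  have ind: "P.indep_vars (\<lambda>_. borel) (\<lambda>i f. f i) UNIV"
  proof (subst P.indep_vars_iff_distr_eq_PiM')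
    show "distr ?P (PiM UNIV (\<lambda>_. borel)) (\<lambda>x. \<lambda>i\<in>UNIV. x i) = PiM UNIV (\<lambda>i. distr ?P borel (\<lambda>x. x i))"
    proof -
      have "distr ?P (PiM UNIV (\<lambda>_. borel)) (\<lambda>x. \<lambda>i\<in>UNIV. x i) = distr ?P ?P (\<lambda>x. x)"
        by (rule distr_cong) (auto simp: space_PiM cong: sets_PiM_cong)
      also have "\<dots> = ?P" by (rule distr_id)
      also have "\<dots> = PiM UNIV (\<lambda>i. distr ?P borel (\<lambda>x. x i))"
        using comp' by (intro PiM_cong) auto
      finally show ?thesis .
    qed
  qed auto
  have dc: "distributed ?P lborel (\<lambda>f. f i) (normal_density m 1)" for i
      unfolding distributed_def using comp[of i] by auto
  have "distributed ?P lborel (\<lambda>x. \<Sum>i\<in>UNIV. x i) (normal_density (\<Sum>i\<in>(UNIV::'n set). m) (sqrt (\<Sum>i\<in>(UNIV::'n set). 1\<^sup>2)))"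
    using P.sum_indep_normal[where X="\<lambda>i f. f i" and I=UNIV and \<sigma>="\<lambda>_. 1" and \<mu>="\<lambda>_. m"] ind dc by simp
  then have "distributed ?P lborel (\<lambda>f. \<Sum>i\<in>UNIV. f i) (normal_density (real CARD('n) * m) (sqrt (real CARD('n))))"
    by simp
  then show ?thesis
    by (subst (asm) P.normal_standard_normal_convert) auto
qed

lemma gauss_vec_sum_measure:
  assumes B: "B \<in> sets borel"
  shows "measure (gauss_vec m :: (real^'n::finite) measure)
           {z. ((\<Sum>i\<in>UNIV. z$i) - real CARD('n) * m) / sqrt (real CARD('n)) \<in> B}
         = measure (density lborel std_normal_density) B"
proof -
  let ?P = "PiM UNIV (\<lambda>_::'n::finite. Nm m)"
  let ?Z = "\<lambda>f::'n\<Rightarrow>real. ((\<Sum>i\<in>UNIV. f i) - real CARD('n) * m) / sqrt (real CARD('n))"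
  have d: "distributed ?P lborel ?Z std_normal_density" by (rule sum_std)
  have meas: "{z::real^'n. ((\<Sum>i\<in>UNIV. z$i) - real CARD('n) * m) / sqrt (real CARD('n)) \<in> B} \<in> sets borel"
    using B by measurable
  have "measure (gauss_vec m :: (real^'n) measure) {z. ((\<Sum>i\<in>UNIV. z$i) - real CARD('n) * m) / sqrt (real CARD('n)) \<in> B}
      = measure ?P (vec_lambda -` {z::real^'n. ((\<Sum>i\<in>UNIV. z$i) - real CARD('n) * m) / sqrt (real CARD('n)) \<in> B} \<inter> space ?P)"
    unfolding gauss_vec_PiM using meas
    by (subst measure_distr) (auto simp: vec_lambda_measurable_Nm)
  also have "vec_lambda -` {z::real^'n. ((\<Sum>i\<in>UNIV. z$i) - real CARD('n) * m) / sqrt (real CARD('n)) \<in> B} \<inter> space ?P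
      = ?Z -` B \<inter> space ?P" by auto
  also have "measure ?P (?Z -` B \<inter> space ?P) = measure (distr ?P lborel ?Z) B"
    using d B by (subst measure_distr) (auto simp: distributed_def)
  also have "\<dots> = measure (density lborel std_normal_density) B"
    using d by (simp add: distributed_def)
  finally show ?thesis .
qed


lemma gauss_vec_shift:
  "(gauss_vec m :: (real^'n::finite) measure) = distr (gauss_vec 0) borel (\<lambda>w. (\<chi> i. m) + w)"
proof -
  have "(gauss_vec m :: (real^'n) measure) =
     density (distr lborel borel ((+) (\<chi> i. m))) (\<lambda>z. ennreal (\<Prod>i\<in>UNIV. normal_density m 1 (z $ i)))"
    unfolding gauss_vec_def lborel_distr_plus ..
  also have "\<dots> = distr (density lborel (\<lambda>w::real^'n. ennreal (\<Prod>i\<in>UNIV. normal_density m 1 (((\<chi> i. m) + w) $ i)))) borel ((+) (\<chi> i. m))"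
    by (subst density_distr) (auto simp: comp_def)
  also have "(\<lambda>w::real^'n. ennreal (\<Prod>i\<in>UNIV. normal_density m 1 (((\<chi> i. m) + w) $ i)))
      = (\<lambda>w. ennreal (\<Prod>i\<in>UNIV. normal_density 0 1 (w $ i)))"
    by (simp add: normal_density_def)
  finally show ?thesis unfolding gauss_vec_def by simp
qed

lemma gauss_vec_shift_measure:
  assumes "A \<in> sets borel"
  shows "measure (gauss_vec m :: (real^'n::finite) measure) A
     = measure (gauss_vec 0) {w. (\<chi> i. m) + w \<in> A}"
proof -
  have sp: "space (gauss_vec 0 :: (real^'n) measure) = UNIV" by (simp add: gauss_vec_def)
  have me: "((+) (\<chi> i. m)) \<in> (gauss_vec 0 :: (real^'n) measure) \<rightarrow>\<^sub>M borel"
    by (subst measurable_cong_sets[OF sets_gauss_vec refl]) measurable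
  show ?thesis using assms me by (subst gauss_vec_shift) (simp add: measure_distr vimage_def sp)
qed


definition Kd :: "real \<Rightarrow> real \<Rightarrow> bool \<Rightarrow> ((real \<times> (real^'n::finite)) \<times> real) measure" where
  "Kd eta y b = distr (gauss_vec (y * eta)) borel (\<lambda>z. (((if b then y else - y), z), y))"

definition Kin :: "real \<Rightarrow> real \<Rightarrow> real \<Rightarrow> ((real \<times> (real^'n::finite)) \<times> real) measure" where
  "Kin p eta y = measure_pmf (bernoulli_pmf p) \<bind> Kd eta y"

lemma data_dist_Kin: "data_dist p eta = measure_pmf (pmf_of_set {-1, 1::real}) \<bind> Kin p eta"
  unfolding data_dist_def Kin_def Kd_def ..

lemma pair_meas: "(\<lambda>z::real^'n::finite. ((c, z), y)) \<in> gauss_vec m \<rightarrow>\<^sub>M borel"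
  by (subst measurable_cong_sets[OF sets_gauss_vec refl])
     (intro borel_measurable_continuous_onI continuous_intros)

lemma Kd_meas: "(\<lambda>z::real^'n::finite. (((if b then y else - y), z), y)) \<in> gauss_vec m \<rightarrow>\<^sub>M borel"
  by (cases b) (simp_all add: pair_meas)

lemma Kd_prob: "prob_space (Kd eta y b :: ((real \<times> (real^'n::finite)) \<times> real) measure)"
  unfolding Kd_def by (intro prob_space.prob_space_distr gauss_vec_prob Kd_meas)

lemma Kd_sets[simp]: "sets (Kd eta y b :: ((real \<times> (real^'n::finite)) \<times> real) measure) = sets borel"
  unfolding Kd_def by simp

lemma Kd_sub: "Kd eta y b \<in> space (subprob_algebra (borel :: ((real \<times> (real^'n::finite)) \<times> real) measure))"
  by (simp add: space_subprob_algebra Kd_prob prob_space_imp_subprob_space)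

lemma Kd_measurable: "Kd eta y \<in> measure_pmf q \<rightarrow>\<^sub>M subprob_algebra (borel :: ((real \<times> (real^'n::finite)) \<times> real) measure)"
  by (simp add: measurable_pmf_measure1 Kd_sub)

lemma Kin_prob: "prob_space (Kin p eta y :: ((real \<times> (real^'n::finite)) \<times> real) measure)"
  unfolding Kin_def
  by (rule prob_space.prob_space_bind[OF prob_space_measure_pmf _ Kd_measurable]) (simp add: Kd_prob)

lemma Kin_sets[simp]: "sets (Kin p eta y :: ((real \<times> (real^'n::finite)) \<times> real) measure) = sets borel"
  unfolding Kin_def by (rule sets_bind) auto

lemma Kin_sub: "Kin p eta y \<in> space (subprob_algebra (borel :: ((real \<times> (real^'n::finite)) \<times> real) measure))"
  by (simp add: space_subprob_algebra Kin_prob prob_space_imp_subprob_space)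

lemma Kin_measurable: "Kin p eta \<in> measure_pmf q \<rightarrow>\<^sub>M subprob_algebra (borel :: ((real \<times> (real^'n::finite)) \<times> real) measure)"
  by (simp add: measurable_pmf_measure1 Kin_sub)

lemma D_prob: "prob_space (data_dist p eta :: ((real \<times> (real^'n::finite)) \<times> real) measure)"
  unfolding data_dist_Kin
  by (rule prob_space.prob_space_bind[OF prob_space_measure_pmf _ Kin_measurable]) (simp add: Kin_prob)

lemma D_sets[simp]: "sets (data_dist p eta :: ((real \<times> (real^'n::finite)) \<times> real) measure) = sets borel"
  unfolding data_dist_Kin by (rule sets_bind) auto

lemma Kd_emeasure:
  assumes A: "A \<in> sets borel"
  shows "emeasure (Kd eta y b :: ((real \<times> (real^'n::finite)) \<times> real) measure) A
     = ennreal (measure (gauss_vec (y*eta)) {z. (((if b then y else - y), z), y) \<in> A})"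
proof -
  interpret G: prob_space "gauss_vec (y*eta) :: (real^'n) measure" by (rule gauss_vec_prob)
  have sp: "space (gauss_vec (y*eta) :: (real^'n) measure) = UNIV" by (simp add: gauss_vec_def)
  show ?thesis unfolding Kd_def using A Kd_meas pair_meas
    by (subst emeasure_distr) (auto simp: G.emeasure_eq_measure sp vimage_def)
qed

lemma Kin_emeasure:
  assumes A: "A \<in> sets borel" and p: "0 \<le> p" "p \<le> 1"
  shows "emeasure (Kin p eta y :: ((real \<times> (real^'n::finite)) \<times> real) measure) A
     = ennreal (p * measure (gauss_vec (y*eta)) {z. ((y, z), y) \<in> A}
          + (1 - p) * measure (gauss_vec (y*eta)) {z. ((- y, z), y) \<in> A})"
proof -
  interpret G: prob_space "gauss_vec (y*eta) :: (real^'n) measure" by (rule gauss_vec_prob)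
  have "emeasure (Kin p eta y :: ((real \<times> (real^'n::finite)) \<times> real) measure) A
      = (\<integral>\<^sup>+ b. emeasure (Kd eta y b) A \<partial>measure_pmf (bernoulli_pmf p))"
    unfolding Kin_def using A by (intro emeasure_bind[OF _ Kd_measurable]) auto
  also have "\<dots> = (\<Sum>b\<in>{True, False}. emeasure (Kd eta y b :: ((real \<times> (real^'n::finite)) \<times> real) measure) A * ennreal (pmf (bernoulli_pmf p) b))"
    by (rule nn_integral_measure_pmf_support) auto
  also have "\<dots> = ennreal (measure (gauss_vec (y*eta)) {z. ((y, z), y) \<in> A}) * ennreal p
       + ennreal (measure (gauss_vec (y*eta)) {z. ((- y, z), y) \<in> A}) * ennreal (1 - p)"
    using p A by (simp add: Kd_emeasure)
  also have "\<dots> = ennreal (p * measure (gauss_vec (y*eta)) {z. ((y, z), y) \<in> A}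
          + (1 - p) * measure (gauss_vec (y*eta)) {z. ((- y, z), y) \<in> A})"
    using p by (simp add: ennreal_mult'[symmetric] ennreal_plus[symmetric] mult.commute del: ennreal_plus)
  finally show ?thesis .
qed

lemma D_measure:
  assumes A: "A \<in> sets borel" and p: "0 \<le> p" "p \<le> 1"
  shows "measure (data_dist p eta :: ((real \<times> (real^'n::finite)) \<times> real) measure) A
     = (\<Sum>y\<in>{-1, 1}. p * measure (gauss_vec (y*eta)) {z. ((y, z), y) \<in> A}
          + (1 - p) * measure (gauss_vec (y*eta)) {z. ((- y, z), y) \<in> A}) / 2"
proof -
  define F where "F y = p * measure (gauss_vec (y*eta) :: (real^'n) measure) {z. ((y, z), y) \<in> A}
          + (1 - p) * measure (gauss_vec (y*eta) :: (real^'n) measure) {z. ((- y, z), y) \<in> A}" for y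
  have F0: "F y \<ge> 0" for y using p by (simp add: F_def)
  have "emeasure (data_dist p eta :: ((real \<times> (real^'n::finite)) \<times> real) measure) A
      = (\<integral>\<^sup>+ y. emeasure (Kin p eta y :: ((real \<times> (real^'n::finite)) \<times> real) measure) A \<partial>measure_pmf (pmf_of_set {-1, 1::real}))"
    unfolding data_dist_Kin using A by (intro emeasure_bind[OF _ Kin_measurable]) auto
  also have "\<dots> = (\<Sum>y\<in>{-1, 1}. emeasure (Kin p eta y :: ((real \<times> (real^'n::finite)) \<times> real) measure) A * ennreal (pmf (pmf_of_set {-1, 1::real}) y))"
    by (rule nn_integral_measure_pmf_support) auto
  also have "\<dots> = (\<Sum>y\<in>{-1, 1}. ennreal (F y) * ennreal (1/2))"
    using A p by (intro sum.cong refl) (auto simp: Kin_emeasure F_def pmf_of_set)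
  also have "\<dots> = ennreal ((\<Sum>y\<in>{-1, 1}. F y) / 2)"
    using F0 by (simp add: ennreal_divide_numeral[symmetric] divide_ennreal_def distrib_right ennreal_plus)
  finally have "emeasure (data_dist p eta :: ((real \<times> (real^'n::finite)) \<times> real) measure) A = ennreal ((\<Sum>y\<in>{-1, 1}. F y) / 2)" .
  moreover have S0: "(\<Sum>y\<in>{-1, 1}. F y) / 2 \<ge> 0" using F0 by (simp add: sum_nonneg)
  ultimately have "measure (data_dist p eta :: ((real \<times> (real^'n::finite)) \<times> real) measure) A = (\<Sum>y\<in>{-1, 1}. F y) / 2"
    by (simp only: measure_def enn2real_ennreal)
  then show ?thesis unfolding F_def .
qed


lemma linf_const: "linf_norm (0::real, (\<chi> i. t) :: real^'n::finite) = \<bar>t\<bar>"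
proof -
  have "range (\<lambda>i::'n. \<bar>(\<chi> i. t) $ i\<bar>) = {\<bar>t\<bar>}" by auto
  then show ?thesis unfolding linf_norm_def by simp
qed

lemma l1_x0: "l1_norm (a::real, 0 :: real^'n::finite) = \<bar>a\<bar>"
  unfolding l1_norm_def by simp

lemma affine_mem:
  assumes x0: "\<bar>x0\<bar> = 1" and t: "\<bar>t\<bar> = 2 / sqrt (real CARD('n::finite))"
  shows "(0, w) \<in> S_affine (real CARD('n)) (x0, (\<chi> i. t) + (w :: real^'n))"
proof -
  have "(0, w) = (x0, (\<chi> i. t) + w) + (0, - (\<chi> i. t)) + (- x0, 0)" by simp
  moreover have "linf_norm (0::real, - (\<chi> i. t) :: real^'n) \<le> 3 * (2/3) / sqrt (real CARD('n))"
  proof -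
    have "- (\<chi> i. t) = ((\<chi> i. - t) :: real^'n)" by (simp add: vec_eq_iff)
    then show ?thesis using t linf_const[where 'n='n, of "-t"] by simp
  qed
  moreover have "l1_norm (- x0, 0 :: real^'n) \<le> 3 * (1 - 2/3)" using x0 l1_x0[where 'n='n, of "-x0"] by simp
  ultimately show ?thesis unfolding S_affine_def
    by (intro CollectI exI[of _ "(0::real, - (\<chi> i. t) :: real^'n)"] exI[of _ "(- x0, 0 :: real^'n)"]
        conjI bexI[of _ "2/3"]) auto
qed


lemma pre_borel:
  assumes "A \<in> sets (borel :: ((real \<times> (real^'n::finite)) \<times> real) measure)"
  shows "{w :: real^'n. ((c, v + w), y) \<in> A} \<in> sets borel"
proof -
  have "(\<lambda>w::real^'n. ((c, v + w), y)) \<in> borel_measurable borel"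
    by (intro borel_measurable_continuous_onI continuous_intros)
  from measurable_sets[OF this assms] show ?thesis by (simp add: vimage_def)
qed

lemma pre_borel0:
  assumes "A \<in> sets (borel :: ((real \<times> (real^'n::finite)) \<times> real) measure)"
  shows "{w :: real^'n. ((c, w), y) \<in> A} \<in> sets borel"
  using pre_borel[OF assms, of c 0 y] by simp

lemma lower:
  fixes f :: "real \<times> (real^'n::finite) \<Rightarrow> real"
  assumes f: "\<forall>x. f x \<in> {-1, 1}" and p: "0 \<le> p" "p \<le> 1"
  shows "adv_risk (data_dist p (2 / sqrt (real CARD('n)))) f (S_affine (real CARD('n))) \<ge> 1/2"
proof -
  define eta where "eta = 2 / sqrt (real CARD('n))"
  let ?D = "data_dist p eta :: ((real \<times> (real^'n)) \<times> real) measure"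
  interpret G0: prob_space "gauss_vec 0 :: (real^'n) measure" by (rule gauss_vec_prob)
  have sp0: "space (gauss_vec 0 :: (real^'n) measure) = UNIV" by (simp add: gauss_vec_def)
  have spD: "space ?D = UNIV" using sets_eq_imp_space_eq[OF D_sets] by simp
  have key: "measure ?D A \<ge> 1/2"
    if A: "A \<in> sets ?D" and sub: "{(x, y) \<in> space ?D. \<exists>x'\<in>S_affine (real CARD('n)) x. f x' \<noteq> y} \<subseteq> A" for A
  proof -
    have Ab: "A \<in> sets borel" using A by simp
    define B where "B x0 y = {w::real^'n. ((x0, (\<chi> i. y*eta) + w), y) \<in> A}" for x0 y
    have Bm: "B x0 y \<in> sets (gauss_vec 0)" for x0 y unfolding B_def using pre_borel[OF Ab] by simp
    have cover: "B x0 1 \<union> B x0' (-1) = UNIV" if x0: "\<bar>x0\<bar> = 1" and x0': "\<bar>x0'\<bar> = 1" for x0 x0'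
    proof safe
      fix w :: "real^'n"
      assume nb: "w \<notin> B x0' (-1)"
      show "w \<in> B x0 1"
      proof (cases "f (0, w) = 1")
        case True
        have "(0, w) \<in> S_affine (real CARD('n)) (x0', (\<chi> i. (-1)*eta) + w)"
          by (rule affine_mem[OF x0']) (simp add: eta_def)
        then have "((x0', (\<chi> i. (-1)*eta) + w), -1) \<in> A"
          using sub True spD by force
        then show ?thesis using nb unfolding B_def by simp
      next
        case False
        then have fm: "f (0, w) = -1" using f by auto
        have "(0, w) \<in> S_affine (real CARD('n)) (x0, (\<chi> i. 1*eta) + w)"
          by (rule affine_mem[OF x0]) (simp add: eta_def)
        then have "((x0, (\<chi> i. 1*eta) + w), 1) \<in> A"
          using sub fm spD by force
        then show ?thesis unfolding B_def by simp
      qed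
    qed auto
    have sum1: "measure (gauss_vec 0) (B x0 1) + measure (gauss_vec 0) (B x0' (-1)) \<ge> 1"
      if "\<bar>x0\<bar> = 1" "\<bar>x0'\<bar> = 1" for x0 x0'
    proof -
      have "1 = measure (gauss_vec 0 :: (real^'n) measure) (B x0 1 \<union> B x0' (-1))"
        using cover[OF that] G0.prob_space sp0 by simp
      also have "\<dots> \<le> measure (gauss_vec 0) (B x0 1) + measure (gauss_vec 0) (B x0' (-1))"
        by (rule measure_Un_le) (use Bm in auto)
      finally show ?thesis .
    qed
    have shift: "measure (gauss_vec (y*eta) :: (real^'n) measure) {z. ((x0, z), y) \<in> A} = measure (gauss_vec 0) (B x0 y)" for x0 y
      unfolding B_def by (subst gauss_vec_shift_measure) (auto simp: pre_borel0[OF Ab])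
    have "measure ?D A = (\<Sum>y\<in>{-1, 1}. p * measure (gauss_vec (y*eta) :: (real^'n) measure) {z. ((y, z), y) \<in> A}
          + (1 - p) * measure (gauss_vec (y*eta) :: (real^'n) measure) {z. ((- y, z), y) \<in> A}) / 2"
      using D_measure[OF Ab p] by simp
    also have "\<dots> = (p * (measure (gauss_vec 0) (B 1 1) + measure (gauss_vec 0) (B (-1) (-1)))
        + (1 - p) * (measure (gauss_vec 0) (B (-1) 1) + measure (gauss_vec 0) (B 1 (-1)))) / 2"
      by (simp add: shift algebra_simps)
    also have "\<dots> \<ge> (p * 1 + (1 - p) * 1) / 2"
      using sum1[of 1 "-1"] sum1[of "-1" 1] p
      by (intro divide_right_mono add_mono mult_left_mono) auto
    finally show ?thesis by simp
  qed
  show ?thesis unfolding adv_risk_def eta_def[symmetric]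
  proof (rule cInf_greatest)
    show "{measure ?D A |A. A \<in> sets ?D \<and> {(x, y). (x, y) \<in> space ?D \<and> (\<exists>x'\<in>S_affine (real CARD('n)) x. f x' \<noteq> y)} \<subseteq> A} \<noteq> {}"
      using spD by (auto intro!: exI[of _ "space ?D"])
  qed (use key in auto)
qed


definition gcl :: "real \<Rightarrow> real \<times> (real^'n::finite) \<Rightarrow> real" where
  "gcl s x = (let S = (\<Sum>i\<in>UNIV. snd x $ i) in
     if fst x \<ge> 3/4 then (if S \<le> -(1455/1000)* s then -1 else 1)
     else if fst x \<le> -3/4 then (if S \<ge> (1455/1000)* s then 1 else -1)
     else (if S \<ge> 0 then 1 else -1))"

lemma gcl_range: "gcl s x \<in> {-1, 1}" unfolding gcl_def Let_def by auto

lemma robust_core: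
  fixes s Sz Sr r0 y :: real
  assumes s: "s \<ge> 1413/100"
    and y: "y = 1 \<or> y = -1" and T: "y * Sz \<ge> (155/100) * s"
    and pert: "(\<bar>r0\<bar> \<le> 1/4 \<and> \<bar>Sr\<bar> \<le> 3 * s) \<or> (\<bar>Sr\<bar> \<le> 3 - \<bar>r0\<bar>)"
  shows "(let S = Sz + Sr in
     if y + r0 \<ge> 3/4 then (if S \<le> -(1455/1000)* s then -1 else 1)
     else if y + r0 \<le> -3/4 then (if S \<ge> (1455/1000)* s then 1 else -1)
     else (if S \<ge> 0 then 1 else (-1::real))) = y"
  using y
proof
  assume y1: "y = 1"
  then show ?thesis using s T pert unfolding Let_def by auto
next
  assume y1: "y = -1"
  then show ?thesis using s T pert unfolding Let_def by auto
qed

lemma sqrt_bound: "real CARD('n::finite) \<ge> 200 \<Longrightarrow> sqrt (real CARD('n)) \<ge> 1413/100"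
proof -
  assume d: "real CARD('n) \<ge> 200"
  have "(1413/100::real) = sqrt ((1413/100)^2)" by simp
  also have "\<dots> \<le> sqrt (real CARD('n))" using d by (intro real_sqrt_le_mono) (simp add: power2_eq_square)
  finally show ?thesis .
qed

lemma robust:
  fixes z :: "real^'n::finite" and r :: "real \<times> (real^'n)"
  assumes d: "real CARD('n) \<ge> 200"
    and y: "y = 1 \<or> y = -1" and T: "y * (\<Sum>i\<in>UNIV. z$i) \<ge> (155/100) * sqrt (real CARD('n))"
    and r: "linf_norm r \<le> 3 / sqrt (real CARD('n)) \<or> l1_norm r \<le> 3"
  shows "gcl (sqrt (real CARD('n))) ((y, z) + r) = y"
proof -
  define s where "s = sqrt (real CARD('n))"
  have s: "s \<ge> 1413/100" unfolding s_def using sqrt_bound d by blast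
  have ss: "s * s = real CARD('n)" unfolding s_def by simp
  define Sr where "Sr = (\<Sum>i\<in>UNIV. snd r $ i)"
  have absS: "\<bar>Sr\<bar> \<le> (\<Sum>i\<in>UNIV. \<bar>snd r $ i\<bar>)" unfolding Sr_def by (rule sum_abs)
  have pert: "(\<bar>fst r\<bar> \<le> 1/4 \<and> \<bar>Sr\<bar> \<le> 3 * s) \<or> (\<bar>Sr\<bar> \<le> 3 - \<bar>fst r\<bar>)"
    using r
  proof
    assume li: "linf_norm r \<le> 3 / sqrt (real CARD('n))"
    have fin: "finite (range (\<lambda>i. \<bar>snd r $ i\<bar>))" by simp
    have ci: "\<bar>snd r $ i\<bar> \<le> 3 / s" for i
    proof -
      have "\<bar>snd r $ i\<bar> \<le> Max (range (\<lambda>i. \<bar>snd r $ i\<bar>))" by (rule Max_ge[OF fin]) auto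
      then show ?thesis using li unfolding linf_norm_def s_def by linarith
    qed
    have "\<bar>fst r\<bar> \<le> 3 / s" using li unfolding linf_norm_def s_def by linarith
    also have "3 / s \<le> 3 / (1413/100)" using s by (intro divide_left_mono) auto
    finally have f: "\<bar>fst r\<bar> \<le> 1/4" by simp
    have "(\<Sum>i\<in>UNIV. \<bar>snd r $ i\<bar>) \<le> (\<Sum>i\<in>(UNIV::'n set). 3 / s)" by (rule sum_mono) (rule ci)
    also have "\<dots> = real CARD('n) * (3 / s)" by simp
    also have "\<dots> = 3 * s" using ss s by (simp add: field_simps)
    finally show ?thesis using f absS by linarith
  next
    assume "l1_norm r \<le> 3"
    then show ?thesis using absS unfolding l1_norm_def by linarith
  qed
  have sum: "(\<Sum>i\<in>UNIV. snd ((y, z) + r) $ i) = (\<Sum>i\<in>UNIV. z$i) + Sr"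
    unfolding Sr_def by (simp add: sum.distrib)
  have "gcl s ((y, z) + r) = (let S = (\<Sum>i\<in>UNIV. z$i) + Sr in
     if y + fst r \<ge> 3/4 then (if S \<le> -(1455/1000)* s then -1 else 1)
     else if y + fst r \<le> -3/4 then (if S \<ge> (1455/1000)* s then 1 else -1)
     else (if S \<ge> 0 then 1 else (-1::real)))"
  proof -
    have fe: "fst ((y, z) + r) = y + fst r" by (cases r) simp
    show ?thesis unfolding gcl_def sum fe by simp
  qed
  also have "\<dots> = y" by (rule robust_core[OF s y _ pert]) (use T s_def in simp)
  finally show ?thesis unfolding s_def .
qed


lemma Phi_range: "0 \<le> Phi t" "Phi t \<le> 1"
  unfolding Phi_def by (simp_all add: N.prob_le_1)

lemma gauss_tail:
  assumes d: "real CARD('n::finite) \<ge> 200" and y: "y = 1 \<or> y = -1"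
  shows "measure (gauss_vec (y * (2 / sqrt (real CARD('n)))) :: (real^'n) measure)
     {z. \<not> (y * (\<Sum>i\<in>UNIV. z$i) \<ge> (155/100) * sqrt (real CARD('n)))} \<le> 327/1000"
proof -
  define s where "s = sqrt (real CARD('n))"
  have s: "s > 0" unfolding s_def by simp
  have ss: "s * s = real CARD('n)" unfolding s_def by simp
  have e: "((\<Sum>i\<in>UNIV. z$i) - real CARD('n) * (y * (2 / s))) / s = (\<Sum>i\<in>UNIV. z$i) / s - 2 * y" for z :: "real^'n"
    using s by (simp add: ss[symmetric] field_simps)
  show ?thesis using y
  proof
    assume y1: "y = 1"
    have "{z :: real^'n. \<not> (y * (\<Sum>i\<in>UNIV. z$i) \<ge> (155/100) * s)}
        = {z. ((\<Sum>i\<in>UNIV. z$i) - real CARD('n) * (y * (2 / s))) / s \<in> {x. x < -(45/100)}}"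
      unfolding e using s y1 by (auto simp: field_simps)
    then show ?thesis using gauss_vec_sum_measure[where 'n='n, of "{x. x < -(45/100)}" "y * (2 / s)"] tail045(1)
      unfolding s_def by simp
  next
    assume y1: "y = -1"
    have "{z :: real^'n. \<not> (y * (\<Sum>i\<in>UNIV. z$i) \<ge> (155/100) * s)}
        = {z. ((\<Sum>i\<in>UNIV. z$i) - real CARD('n) * (y * (2 / s))) / s \<in> {x. x > 45/100}}"
      unfolding e using s y1 by (auto simp: field_simps)
    then show ?thesis using gauss_vec_sum_measure[where 'n='n, of "{x. x > 45/100}" "y * (2 / s)"] tail045(2)
      unfolding s_def by simp
  qed
qed

lemma upper:
  assumes d: "real CARD('n::finite) \<ge> 200"
  shows "adv_risk (data_dist (1 - Phi (-2)) (2 / sqrt (real CARD('n))))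
           (gcl (sqrt (real CARD('n))) :: real \<times> (real^'n) \<Rightarrow> real)
           (\<lambda>x. S_inf (real CARD('n)) x \<union> S_one x) \<le> 0.35"
proof -
  define s where "s = sqrt (real CARD('n))"
  define p where "p = 1 - Phi (-2)"
  define eta where "eta = 2 / s"
  have p: "0 \<le> p" "p \<le> 1" "p \<ge> 1 - 231/10000" using Phi_range[of "-2"] Phi_m2 unfolding p_def by auto
  let ?D = "data_dist p eta :: ((real \<times> (real^'n)) \<times> real) measure"
  define A where "A = {((x0, z), y). \<not> ((y = 1 \<or> y = -1) \<and> x0 = y \<and> y * (\<Sum>i\<in>UNIV. (z::real^'n)$i) \<ge> (155/100) * s)}"
  have Ab: "A \<in> sets borel"
  proof -
    have "closed {w :: (real \<times> (real^'n)) \<times> real. (snd w = 1 \<or> snd w = -1) \<and> fst (fst w) = snd w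
        \<and> snd w * (\<Sum>i\<in>UNIV. snd (fst w) $ i) \<ge> (155/100) * s}"
      by (intro closed_Collect_conj closed_Collect_disj closed_Collect_eq closed_Collect_le continuous_intros)
    then have "open (- {w :: (real \<times> (real^'n)) \<times> real. (snd w = 1 \<or> snd w = -1) \<and> fst (fst w) = snd w
        \<and> snd w * (\<Sum>i\<in>UNIV. snd (fst w) $ i) \<ge> (155/100) * s})" by auto
    moreover have "A = - {w :: (real \<times> (real^'n)) \<times> real. (snd w = 1 \<or> snd w = -1) \<and> fst (fst w) = snd w
        \<and> snd w * (\<Sum>i\<in>UNIV. snd (fst w) $ i) \<ge> (155/100) * s}"
      unfolding A_def by auto
    ultimately show ?thesis by simp
  qed
  have sub: "{(x, y). (x, y) \<in> space ?D \<and> (\<exists>x'\<in>S_inf (real CARD('n)) x \<union> S_one x. gcl s x' \<noteq> y)} \<subseteq> A"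
  proof (clarify)
    fix x0 y x' and z :: "real^'n"
    assume x': "x' \<in> S_inf (real CARD('n)) (x0, z) \<union> S_one (x0, z)" and ne: "gcl s x' \<noteq> y"
    show "((x0, z), y) \<in> A"
    proof (rule ccontr)
      assume "((x0, z), y) \<notin> A"
      then have y: "y = 1 \<or> y = -1" and x0: "x0 = y" and T: "y * (\<Sum>i\<in>UNIV. z$i) \<ge> (155/100) * s"
        unfolding A_def by auto
      from x' obtain r where r: "x' = (x0, z) + r" "linf_norm r \<le> 3 / sqrt (real CARD('n)) \<or> l1_norm r \<le> 3"
        unfolding S_inf_def S_one_def by auto
      have "gcl s x' = y" unfolding r(1) x0 s_def
        by (rule robust[OF d y _ r(2)]) (use T s_def in simp)
      then show False using ne by simp
    qed
  qed
  interpret G: prob_space "gauss_vec m :: (real^'n) measure" for m by (rule gauss_vec_prob)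
  have t: "measure (gauss_vec (y * eta) :: (real^'n) measure) {z. ((y, z), y) \<in> A} \<le> 327/1000"
    if "y = 1 \<or> y = -1" for y
  proof -
    have "{z. ((y, z), y) \<in> A} = {z :: real^'n. \<not> (y * (\<Sum>i\<in>UNIV. z$i) \<ge> (155/100) * s)}"
      unfolding A_def using that by auto
    then show ?thesis using gauss_tail[OF d that] unfolding eta_def s_def by simp
  qed
  have "measure ?D A = (\<Sum>y\<in>{-1, 1}. p * measure (gauss_vec (y*eta) :: (real^'n) measure) {z. ((y, z), y) \<in> A}
          + (1 - p) * measure (gauss_vec (y*eta) :: (real^'n) measure) {z. ((- y, z), y) \<in> A}) / 2"
    by (rule D_measure[OF Ab p(1,2)])
  also have "\<dots> \<le> ((p * (327/1000) + (1 - p) * 1) + (p * (327/1000) + (1 - p) * 1)) / 2"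
  proof -
    have b: "p * measure (gauss_vec (y*eta) :: (real^'n) measure) {z. ((y, z), y) \<in> A}
          + (1 - p) * measure (gauss_vec (y*eta) :: (real^'n) measure) {z. ((- y, z), y) \<in> A}
          \<le> p * (327/1000) + (1 - p) * 1" if "y = 1 \<or> y = -1" for y
      using t[OF that] p G.prob_le_1 by (intro add_mono mult_left_mono) auto
    show ?thesis using b[of 1] b[of "-1"] by simp
  qed
  also have "\<dots> \<le> 0.35" using p by simp
  finally have mA: "measure ?D A \<le> 0.35" .
  have "adv_risk ?D (gcl s) (\<lambda>x. S_inf (real CARD('n)) x \<union> S_one x) \<le> measure ?D A"
    unfolding adv_risk_def
  proof (rule cInf_lower)
    show "measure ?D A \<in> {measure ?D A |A. A \<in> sets ?D \<and> {(x, y). (x, y) \<in> space ?D \<and> (\<exists>x'\<in>S_inf (real CARD('n)) x \<union> S_one x. gcl s x' \<noteq> y)} \<subseteq> A}"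
      using Ab sub by auto
    show "bdd_below {measure ?D A |A. A \<in> sets ?D \<and> {(x, y). (x, y) \<in> space ?D \<and> (\<exists>x'\<in>S_inf (real CARD('n)) x \<union> S_one x. gcl s x' \<noteq> y)} \<subseteq> A}"
      by (rule bdd_belowI[of _ 0]) auto
  qed
  then show ?thesis using mA unfolding p_def eta_def s_def by simp
qed


theorem mainTheorem6:
  assumes "CARD('n::finite) \<ge> 200"
  shows "(\<exists>g :: real \<times> (real^'n) \<Rightarrow> real. (\<forall>x. g x \<in> {-1, 1}) \<and>
            adv_risk (data_dist (1 - Phi (-2)) (2 / sqrt (real CARD('n)))) g
              (\<lambda>x. S_inf (real CARD('n)) x \<union> S_one x) \<le> 0.35)
       \<and> (\<forall>f :: real \<times> (real^'n) \<Rightarrow> real. (\<forall>x. f x \<in> {-1, 1}) \<longrightarrow>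
            adv_risk (data_dist (1 - Phi (-2)) (2 / sqrt (real CARD('n)))) f
              (S_affine (real CARD('n))) \<ge> 1 / 2)"
proof (intro conjI allI impI)
  have d: "real CARD('n) \<ge> 200" using assms by simp
  show "\<exists>g :: real \<times> (real^'n) \<Rightarrow> real. (\<forall>x. g x \<in> {-1, 1}) \<and>
            adv_risk (data_dist (1 - Phi (-2)) (2 / sqrt (real CARD('n)))) g
              (\<lambda>x. S_inf (real CARD('n)) x \<union> S_one x) \<le> 0.35"
    by (rule exI[of _ "gcl (sqrt (real CARD('n)))"]) (use gcl_range upper[OF d] in blast)
next
  fix f :: "real \<times> (real^'n) \<Rightarrow> real"
  assume f: "\<forall>x. f x \<in> {-1, 1}"
  show "adv_risk (data_dist (1 - Phi (-2)) (2 / sqrt (real CARD('n)))) f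
              (S_affine (real CARD('n))) \<ge> 1 / 2"
    by (rule lower[OF f]) (use Phi_range[of "-2"] in auto)
qed

end
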